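(* Let $R$ be a ring and let $a\in R$ be such that for some integer $n\geq 2$ the element $a^n$ is regular, i.e., $a^n=a^nba^n$ for some $b\in R$. Then there exists an idempotent $e\in aRa$ such that $(a(1-e))^n=0$; that is, $a$ is a D-regularly nil clean element of index at most $n$.
   Context: All rings are associative with identity $1\neq 0$. An element $a\in R$ is called D-regularly nil clean of index at most $k$ if there is an idempotent $e\in aRa$ with $(a(1-e))^k=0$. *)

theory Defs
  imports Main
begin

definition D_regularly_nil_clean_index :: "'a::ring_1 \<Rightarrow> nat \<Rightarrow> bool" where
  "D_regularly_nil_clean_index a k \<longleftrightarrow>
     (\<exists>e. (\<exists>r. e = a * r * a) \<and> e * e = e \<and> (a * (1 - e)) ^ k = 0)"

end

theory Submission
  imports Defs
begin

lemma key_pow: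
  fixes f a :: "'a::ring_1"
  assumes h: "(1 - f) * a * (1 - f) = (1 - f) * a"
  shows "((1 - f) * a) ^ Suc m = (1 - f) * a ^ Suc m"
proof (induction m)
  case 0 then show ?case by simp
next
  case (Suc m)
  have "((1 - f) * a) ^ Suc (Suc m) = ((1 - f) * a) * ((1 - f) * a) ^ Suc m"
    by (rule power_Suc)
  also have "\<dots> = ((1 - f) * a) * ((1 - f) * a ^ Suc m)" by (simp only: Suc)
  also have "\<dots> = ((1 - f) * a * (1 - f)) * a ^ Suc m"
    by (simp only: mult.assoc)
  also have "\<dots> = (1 - f) * a * a ^ Suc m" by (simp only: h)
  also have "\<dots> = (1 - f) * a ^ Suc (Suc m)"
    by (simp only: power_Suc mult.assoc)
  finally show ?case .
qed

theorem proposition2p5: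
  fixes a b :: "'a::ring_1" and n :: nat
  assumes "n \<ge> 2"
    and "a ^ n = a ^ n * b * a ^ n"
  shows "(\<exists>e. (\<exists>r. e = a * r * a) \<and> e * e = e \<and> (a * (1 - e)) ^ n = 0)
         \<and> D_regularly_nil_clean_index a n"
proof -
  define c where "c = b * a ^ n * b"
  have acac: "a ^ n * c * a ^ n = a ^ n"
    using assms(2) by (metis c_def mult.assoc)
  have cac: "c * a ^ n * c = c"
  proof -
    have "c * a ^ n * c = b * (a ^ n * b * a ^ n) * b * a ^ n * b"
      by (simp add: c_def mult.assoc)
    also have "\<dots> = b * a ^ n * b * a ^ n * b" by (subst assms(2)[symmetric]) (rule refl)
    also have "\<dots> = b * (a ^ n * b * a ^ n) * b" by (simp only: mult.assoc)
    also have "\<dots> = c" unfolding c_def by (subst assms(2)[symmetric]) (rule refl)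
    finally show ?thesis .
  qed
  define f where "f = a ^ n * c"
  define e where "e = a ^ (n - 1) * c * a"
  obtain k where kk: "n = Suc (Suc k)" using assms(1) by (metis add_2_eq_Suc le_Suc_ex)
  have an1: "a ^ n = a * a ^ (n - 1)" by (simp only: kk power_Suc diff_Suc_1)
  have an2: "a ^ (n - 1) = a * a ^ (n - 2)" by (simp add: kk)
  have ein: "\<exists>r. e = a * r * a" unfolding e_def using an2 by (metis mult.assoc)
  have eid: "e * e = e"
  proof -
    have "e * e = a ^ (n - 1) * (c * (a * a ^ (n - 1)) * c) * a"
      by (simp add: e_def mult.assoc)
    also have "\<dots> = e" using cac an1 by (simp add: e_def mult.assoc)
    finally show ?thesis .
  qed
  have ae: "a * (1 - e) = (1 - f) * a"
    by (simp add: e_def f_def an1 algebra_simps mult.assoc)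
  have fan: "(1 - f) * a ^ n = 0"
    using acac by (simp add: f_def algebra_simps)
  have h: "(1 - f) * a * (1 - f) = (1 - f) * a"
  proof -
    have "(1 - f) * a * f = (1 - f) * (a * a ^ n) * c" by (simp add: f_def mult.assoc)
    also have "\<dots> = (1 - f) * a ^ n * a * c" by (simp only: power_commutes mult.assoc)
    also have "\<dots> = 0" using fan by simp
    finally have "(1 - f) * a * f = 0" .
    then show ?thesis by (simp add: right_diff_distrib)
  qed
  have nS: "n = Suc (n - 1)" using assms(1) by simp
  have "(a * (1 - e)) ^ n = ((1 - f) * a) ^ Suc (n - 1)" by (simp only: ae nS[symmetric])
  also have "\<dots> = (1 - f) * a ^ n" using key_pow[OF h, of "Suc k"] by (simp add: kk)
  also have "\<dots> = 0" by (rule fan)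
  finally have "(a * (1 - e)) ^ n = 0" .
  then have ex: "\<exists>e. (\<exists>r. e = a * r * a) \<and> e * e = e \<and> (a * (1 - e)) ^ n = 0"
    using ein eid by blast
  then show ?thesis unfolding D_regularly_nil_clean_index_def by simp
qed

end
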